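(* Let $N$ be an odd positive integer and $r\ge s\ge 2$. Then the Atkin operator $U$ and the nebentypus action of $\Gamma$ on $(\Phi_r^s)^{\mathrm{ab}}$ commute.
   Context: For $M\ge1$, $\Gamma_1(M)=\{\begin{pmatrix}a&b\\c&d\end{pmatrix}\in\mathrm{SL}_2(\mathbb{Z}) : c\equiv0,\ a\equiv d\equiv1 \pmod M\}$, $\Gamma_0(M)=\{c\equiv 0\pmod M\}$, $\Gamma^0(2)=\{b\equiv0\pmod 2\}$ (inside $\mathrm{SL}_2(\mathbb{Z})$). For $r\ge s\ge2$, $\Phi_r^s:=\Gamma_1(N2^s)\cap\Gamma_0(2^r)$; $G^{\mathrm{ab}}$ denotes abelianization. $\Gamma:=1+4\mathbb{Z}_2$, $\Gamma_r:=1+2^r\mathbb{Z}_2$. Nebentypus action: for $\delta\in\Gamma$, choose $\alpha=\begin{pmatrix}a&b\\c&d\end{pmatrix}\in\Gamma_1(4N)\cap\Gamma_0(2^{r+1})\cap\Gamma^0(2)$ with $d\equiv\delta \bmod \Gamma_r$ (such $\alpha$ exists); $\delta$ acts on $(\Phi_r^s)^{\mathrm{ab}}$ by the map induced by conjugation $x\mapsto\alpha x\alpha^{-1}$, which is independent of the choice of $\alpha$. Atkin operator: with $t=\begin{pmatrix}1&0\\0&2\end{pmatrix}$, $U$ on $(\Phi_r^s)^{\mathrm{ab}}$ is the composite of the transfer $(\Phi_r^s)^{\mathrm{ab}}\to(\Phi_r^s\cap\Gamma^0(2))^{\mathrm{ab}}$, the map induced by the isomorphism $x\mapsto txt^{-1}$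 from $\Phi_r^s\cap\Gamma^0(2)$ onto $\Phi_{r+1}^s$, and the inclusion-induced map $(\Phi_{r+1}^s)^{\mathrm{ab}}\to(\Phi_r^s)^{\mathrm{ab}}$. *)

theory Defs
  imports "HOL-Algebra.Algebra" "HOL-Number_Theory.Cong"
begin

text \<open>Integer 2x2 matrices, encoded as (a,b,c,d) for the matrix with rows (a b) and (c d).\<close>
type_synonym m2 = "int \<times> int \<times> int \<times> int"

fun mmul :: "m2 \<Rightarrow> m2 \<Rightarrow> m2" where
  "mmul (a,b,c,d) (e,f,g,h) = (a * e + b * g, a * f + b * h, c * e + d * g, c * f + d * h)"

definition SL2Z :: "m2 monoid" where
  "SL2Z = \<lparr>carrier = {m. case m of (a,b,c,d) \<Rightarrow> a * d - b * c = 1},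
            monoid.mult = mmul, one = (1,0,0,1)\<rparr>"

definition Gamma1 :: "int \<Rightarrow> m2 set" where
  "Gamma1 M = {(a,b,c,d). (a,b,c,d) \<in> carrier SL2Z \<and>
      [c = 0] (mod M) \<and> [a = 1] (mod M) \<and> [d = 1] (mod M)}"

definition Gamma0 :: "int \<Rightarrow> m2 set" where
  "Gamma0 M = {(a,b,c,d). (a,b,c,d) \<in> carrier SL2Z \<and> [c = 0] (mod M)}"

definition Gamma0_up2 :: "m2 set" where
  "Gamma0_up2 = {(a,b,c,d). (a,b,c,d) \<in> carrier SL2Z \<and> [b = 0] (mod 2)}"

definition Phi :: "nat \<Rightarrow> nat \<Rightarrow> nat \<Rightarrow> m2 set" where
  "Phi N r s = Gamma1 (int N * 2^s) \<inter> Gamma0 (2^r)"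

definition Grp :: "m2 set \<Rightarrow> m2 monoid" where
  "Grp H = SL2Z\<lparr>carrier := H\<rparr>"

definition Ab :: "m2 set \<Rightarrow> m2 set monoid" where
  "Ab H = Grp H Mod derived (Grp H) H"

definition ab_class :: "m2 set \<Rightarrow> m2 \<Rightarrow> m2 set" where
  "ab_class H x = derived (Grp H) H #>\<^bsub>Grp H\<^esub> x"

definition rep :: "m2 set \<Rightarrow> m2" where
  "rep C = (SOME x. x \<in> C)"

definition ab_map :: "m2 set \<Rightarrow> (m2 \<Rightarrow> m2) \<Rightarrow> m2 set \<Rightarrow> m2 set" where
  "ab_map K f C = ab_class K (f (rep C))"

definition right_transversal :: "('a, 'b) monoid_scheme \<Rightarrow> 'a set \<Rightarrow> 'a list \<Rightarrow> bool" where
  "right_transversal G H ts \<longleftrightarrow> distinct ts \<and> set ts \<subseteq> carrier G \<and>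
     (\<forall>g \<in> carrier G. \<exists>!t. t \<in> set ts \<and> g \<in> H #>\<^bsub>G\<^esub> t)"

text \<open>Transfer on representatives: for t in the transversal write t g = h_t t', and
  multiply the h_t.\<close>
definition transfer_rep :: "('a, 'b) monoid_scheme \<Rightarrow> 'a set \<Rightarrow> 'a list \<Rightarrow> 'a \<Rightarrow> 'a" where
  "transfer_rep G H ts g =
     foldr (\<lambda>t acc. (t \<otimes>\<^bsub>G\<^esub> g \<otimes>\<^bsub>G\<^esub>
              inv\<^bsub>G\<^esub> (THE t'. t' \<in> set ts \<and> t \<otimes>\<^bsub>G\<^esub> g \<in> H #>\<^bsub>G\<^esub> t')) \<otimes>\<^bsub>G\<^esub> acc)
           ts \<one>\<^bsub>G\<^esub>"

definition transfer :: "m2 set \<Rightarrow> m2 set \<Rightarrow> m2 set \<Rightarrow> m2 set" where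
  "transfer G H = ab_map H
     (transfer_rep (Grp G) H (SOME ts. right_transversal (Grp G) H ts))"

text \<open>Conjugation by t = diag(1,2): x \<mapsto> t x t^{-1}.\<close>
fun conj_t :: "m2 \<Rightarrow> m2" where
  "conj_t (a,b,c,d) = (a, b div 2, 2 * c, d)"

definition atkinU :: "nat \<Rightarrow> nat \<Rightarrow> nat \<Rightarrow> m2 set \<Rightarrow> m2 set" where
  "atkinU N r s C =
     ab_map (Phi N r s) id
       (ab_map (Phi N (r+1) s) conj_t
         (transfer (Phi N r s) (Phi N r s \<inter> Gamma0_up2) C))"

text \<open>Nebentypus action of delta on (Phi_r^s)^ab, via a chosen alpha: x \<mapsto> alpha x alpha^{-1}.\<close>
definition neben_act :: "nat \<Rightarrow> nat \<Rightarrow> nat \<Rightarrow> m2 \<Rightarrow> m2 set \<Rightarrow> m2 set" where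
  "neben_act N r s \<alpha> =
     ab_map (Phi N r s) (\<lambda>x. \<alpha> \<otimes>\<^bsub>SL2Z\<^esub> x \<otimes>\<^bsub>SL2Z\<^esub> inv\<^bsub>SL2Z\<^esub> \<alpha>)"

end

theory Submission
  imports Defs
begin

lemma SL2Z_simps[simp]: "carrier SL2Z = {m. case m of (a,b,c,d) \<Rightarrow> a * d - b * c = 1}"
  "monoid.mult SL2Z = mmul" "one SL2Z = (1,0,0,1)"
  by (simp_all add: SL2Z_def)

lemma mmul_assoc: "mmul (mmul x y) z = mmul x (mmul y z)"
  by (cases x; cases y; cases z) (simp add: algebra_simps)

lemma group_SL2Z: "group SL2Z"
proof (rule groupI)
  fix x y assume "x \<in> carrier SL2Z" "y \<in> carrier SL2Z"
  then show "x \<otimes>\<^bsub>SL2Z\<^esub> y \<in> carrier SL2Z"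
    by (cases x; cases y) (auto simp: algebra_simps, (metis (no_types, lifting) mult.assoc mult.left_commute)?)
next
  show "\<one>\<^bsub>SL2Z\<^esub> \<in> carrier SL2Z" by simp
next
  fix x y z show "x \<otimes>\<^bsub>SL2Z\<^esub> y \<otimes>\<^bsub>SL2Z\<^esub> z = x \<otimes>\<^bsub>SL2Z\<^esub> (y \<otimes>\<^bsub>SL2Z\<^esub> z)"
    by (simp add: mmul_assoc)
next
  fix x show "\<one>\<^bsub>SL2Z\<^esub> \<otimes>\<^bsub>SL2Z\<^esub> x = x" by (cases x) simp
next
  fix x assume "x \<in> carrier SL2Z"
  then show "\<exists>y\<in>carrier SL2Z. y \<otimes>\<^bsub>SL2Z\<^esub> x = \<one>\<^bsub>SL2Z\<^esub>"
    by (cases x) (rule_tac x="(snd (snd (snd x)), - fst (snd x), - fst (snd (snd x)), fst x)" in bexI,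
        auto simp: algebra_simps)
qed

interpretation S: group SL2Z by (rule group_SL2Z)

lemma inv_SL2Z: "(a,b,c,d) \<in> carrier SL2Z \<Longrightarrow> inv\<^bsub>SL2Z\<^esub> (a,b,c,d) = (d,-b,-c,a)"
  by (rule S.inv_equality) (auto simp: algebra_simps)

definition PP :: "int \<Rightarrow> int \<Rightarrow> m2 set" where
  "PP M R = {(a,b,c,d). a * d - b * c = 1 \<and> M dvd c \<and> M dvd (a-1) \<and> M dvd (d-1) \<and> R dvd c}"

lemma Phi_PP: "Phi N r s = PP (int N * 2^s) (2^r)"
  by (auto simp: Phi_def PP_def Gamma1_def Gamma0_def cong_0_iff cong_iff_dvd_diff)

lemma up2_iff: "Gamma0_up2 = {(a,b,c,d). a * d - b * c = 1 \<and> even b}"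
  by (auto simp: Gamma0_up2_def cong_0_iff)

lemma subgroup_PP: "subgroup (PP M R) SL2Z"
proof (rule S.subgroupI)
  show "PP M R \<subseteq> carrier SL2Z" by (auto simp: PP_def)
  show "PP M R \<noteq> {}" by (rule_tac ex_in_conv[THEN iffD1], rule exI[of _ "(1,0,0,1)"]) (auto simp: PP_def)
next
  fix x assume "x \<in> PP M R" then obtain a b c d where x: "x = (a,b,c,d)" and h: "a * d - b * c = 1"
    "M dvd c" "M dvd (a-1)" "M dvd (d-1)" "R dvd c" by (auto simp: PP_def)
  then show "inv\<^bsub>SL2Z\<^esub> x \<in> PP M R" by (simp add: inv_SL2Z PP_def algebra_simps)
next
  fix x y assume "x \<in> PP M R" "y \<in> PP M R"
  then obtain a b c d e f g h where x: "x = (a,b,c,d)" and hx: "a * d - b * c = 1"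
    "M dvd c" "M dvd (a-1)" "M dvd (d-1)" "R dvd c" and y: "y = (e,f,g,h)" and hy: "e * h - f * g = 1"
    "M dvd g" "M dvd (e-1)" "M dvd (h-1)" "R dvd g" by (auto simp: PP_def)
  have 1: "(a*e+b*g)*(c*f+d*h) - (a*f+b*h)*(c*e+d*g) = (a * d - b * c) * (e * h - f * g)" by (simp add: algebra_simps)
  have 2: "a*e+b*g - 1 = (a-1)*e + (e-1) + b*g" by (simp add: algebra_simps)
  have 3: "c*f+d*h - 1 = c*f + (d-1)*h + (h-1)" by (simp add: algebra_simps)
  have "M dvd a*e+b*g - 1" unfolding 2 using hx hy by simp
  moreover have "M dvd c*f+d*h - 1" unfolding 3 using hx hy by simp
  moreover have "M dvd c*e+d*g" "R dvd c*e+d*g" using hx hy by simp_all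
  ultimately show "x \<otimes>\<^bsub>SL2Z\<^esub> y \<in> PP M R" unfolding x y PP_def
    using hx hy 1 by simp
qed

lemma subgroup_up2: "subgroup Gamma0_up2 SL2Z"
proof (rule S.subgroupI)
  show "Gamma0_up2 \<subseteq> carrier SL2Z" by (auto simp: up2_iff)
  show "Gamma0_up2 \<noteq> {}" by (rule_tac ex_in_conv[THEN iffD1], rule exI[of _ "(1,0,0,1)"]) (auto simp: up2_iff)
next
  fix x assume "x \<in> Gamma0_up2" then show "inv\<^bsub>SL2Z\<^esub> x \<in> Gamma0_up2"
    by (cases x) (auto simp: up2_iff inv_SL2Z algebra_simps)
next
  fix x y assume "x \<in> Gamma0_up2" "y \<in> Gamma0_up2"
  then obtain a b c d e f g h where x: "x = (a,b,c,d)" and hx: "a * d - b * c = 1" "even b"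
   and y: "y = (e,f,g,h)" and hy: "e * h - f * g = 1" "even f" by (auto simp: up2_iff)
  have 1: "(a*e+b*g)*(c*f+d*h) - (a*f+b*h)*(c*e+d*g) = (a * d - b * c) * (e * h - f * g)" by (simp add: algebra_simps)
  show "x \<otimes>\<^bsub>SL2Z\<^esub> y \<in> Gamma0_up2" unfolding x y up2_iff using hx hy 1 by simp
qed

declare SL2Z_simps(2)[simp del]
lemmas SL2Z_mult = SL2Z_simps(2)

abbreviation gm (infixl "**" 70) where "x ** y \<equiv> monoid.mult SL2Z x y"
abbreviation iv where "iv x \<equiv> m_inv SL2Z x"
abbreviation DD where "DD W \<equiv> derived SL2Z W"

lemma Grp_simps[simp]: "carrier (Grp W) = W" "monoid.mult (Grp W) = monoid.mult SL2Z"
  "one (Grp W) = one SL2Z"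
  by (simp_all add: Grp_def)

lemma rcoset_Grp[simp]: "r_coset (Grp W) = r_coset SL2Z"
  by (intro ext) (simp add: r_coset_def)

lemma group_Grp: "subgroup W SL2Z \<Longrightarrow> group (Grp W)"
  unfolding Grp_def by (rule S.subgroup_imp_group)

lemma inv_Grp[simp]: "subgroup W SL2Z \<Longrightarrow> x \<in> W \<Longrightarrow> inv\<^bsub>Grp W\<^esub> x = iv x"
  unfolding Grp_def by (rule S.m_inv_consistent)

lemma derived_Grp[simp]: "subgroup W SL2Z \<Longrightarrow> derived (Grp W) W = DD W"
  unfolding Grp_def by (rule S.derived_consistent) auto

lemma ab_class_eq: "subgroup W SL2Z \<Longrightarrow> ab_class W x = DD W #>\<^bsub>SL2Z\<^esub> x"
  by (simp add: ab_class_def)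

lemma Ab_eq: "subgroup W SL2Z \<Longrightarrow> Ab W = Grp W Mod DD W"
  by (simp add: Ab_def)

lemma comm_Ab: "subgroup W SL2Z \<Longrightarrow> comm_group (Ab W)"
  using S.derived_quot_of_subgroup_is_comm_group[of W] by (simp add: Ab_eq Grp_def)

lemma D_sub: "subgroup W SL2Z \<Longrightarrow> subgroup (DD W) SL2Z"
  by (rule S.derived_is_subgroup) (rule subgroup.subset)

lemma D_incl: "subgroup W SL2Z \<Longrightarrow> DD W \<subseteq> W"
  by (rule S.derived_incl) auto

lemma normal_D: "subgroup W SL2Z \<Longrightarrow> DD W \<lhd> Grp W"
  unfolding Grp_def by (rule S.derived_subgroup_is_normal)

lemma hom_cls: "subgroup W SL2Z \<Longrightarrow> ab_class W \<in> hom (Grp W) (Ab W)"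
proof -
  assume W: "subgroup W SL2Z"
  have "(\<lambda>a. DD W #>\<^bsub>Grp W\<^esub> a) \<in> hom (Grp W) (Grp W Mod DD W)"
    by (rule normal.r_coset_hom_Mod[OF normal_D[OF W]])
  then show ?thesis using W by (simp add: Ab_eq ab_class_def[abs_def])
qed

lemma gh_cls: "subgroup W SL2Z \<Longrightarrow> group_hom (Grp W) (Ab W) (ab_class W)"
  by (simp add: group_hom_def group_hom_axioms_def hom_cls group_Grp comm_Ab comm_group.axioms(2))

lemma cls_mult: "subgroup W SL2Z \<Longrightarrow> x \<in> W \<Longrightarrow> y \<in> W \<Longrightarrow>
   ab_class W (x ** y) = ab_class W x \<otimes>\<^bsub>Ab W\<^esub> ab_class W y"
  using group_hom.hom_mult[OF gh_cls, of W x y] by simp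

lemma cls_inv: "subgroup W SL2Z \<Longrightarrow> x \<in> W \<Longrightarrow>
   ab_class W (iv x) = inv\<^bsub>Ab W\<^esub> ab_class W x"
  using group_hom.hom_inv[OF gh_cls, of W x] by simp

lemma cls_carrier: "subgroup W SL2Z \<Longrightarrow> x \<in> W \<Longrightarrow> ab_class W x \<in> carrier (Ab W)"
  using hom_cls[of W] by (auto simp: hom_def)

lemma carrier_Ab: "subgroup W SL2Z \<Longrightarrow> C \<in> carrier (Ab W) \<Longrightarrow> \<exists>x\<in>W. C = ab_class W x"
  by (auto simp: Ab_eq carrier_FactGroup ab_class_def)

lemma cls_eq_iff: "subgroup W SL2Z \<Longrightarrow> x \<in> W \<Longrightarrow> y \<in> W \<Longrightarrow>
   ab_class W x = ab_class W y \<longleftrightarrow> x ** iv y \<in> DD W"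
proof -
  assume W: "subgroup W SL2Z" and xy: "x \<in> W" "y \<in> W"
  have c: "x \<in> carrier SL2Z" "y \<in> carrier SL2Z" using xy W subgroup.subset by blast+
  have D: "subgroup (DD W) SL2Z" using D_sub[OF W] .
  show ?thesis
  proof
    assume "ab_class W x = ab_class W y"
    then have "x \<in> DD W #>\<^bsub>SL2Z\<^esub> y" using S.rcos_self[OF c(1) D] W by (simp add: ab_class_eq)
    then show "x ** iv y \<in> DD W" using subgroup.rcos_module_imp[OF D S.is_group c(2)] by blast
  next
    assume "x ** iv y \<in> DD W"
    then have "x \<in> DD W #>\<^bsub>SL2Z\<^esub> y" using subgroup.rcos_module_rev[OF D S.is_group c(2) c(1)] by blast
    then show "ab_class W x = ab_class W y" using S.repr_independence[OF _ c(2) D] W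
      by (simp add: ab_class_eq)
  qed
qed

lemma rep_cls: "subgroup W SL2Z \<Longrightarrow> x \<in> W \<Longrightarrow>
   rep (ab_class W x) \<in> W \<and> ab_class W (rep (ab_class W x)) = ab_class W x"
proof -
  assume W: "subgroup W SL2Z" and x: "x \<in> W"
  have c: "x \<in> carrier SL2Z" using x W subgroup.subset by blast
  have D: "subgroup (DD W) SL2Z" using D_sub[OF W] .
  have "x \<in> ab_class W x" using S.rcos_self[OF c D] W by (simp add: ab_class_eq)
  then have r: "rep (ab_class W x) \<in> ab_class W x" unfolding rep_def by (rule someI)
  then obtain h where h: "h \<in> DD W" "rep (ab_class W x) = h ** x"
    using W by (auto simp: ab_class_eq r_coset_def)
  have "h \<in> W" using h D_incl[OF W] by blast
  then have "rep (ab_class W x) \<in> W" using h x W subgroup.m_closed by metis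
  moreover have "ab_class W (rep (ab_class W x)) = ab_class W x"
    using S.repr_independence[OF _ c D, of "rep (ab_class W x)"] r W by (simp add: ab_class_eq)
  ultimately show ?thesis by simp
qed

lemma commutator_D: "subgroup W SL2Z \<Longrightarrow> h \<in> W \<Longrightarrow> k \<in> W \<Longrightarrow> h ** k ** iv h ** iv k \<in> DD W"
  unfolding derived_def by (rule generate.incl) blast

lemma cls_conj: "subgroup W SL2Z \<Longrightarrow> a \<in> W \<Longrightarrow> k \<in> W \<Longrightarrow>
   ab_class W (k ** a ** iv k) = ab_class W a"
proof -
  assume W: "subgroup W SL2Z" and ak: "a \<in> W" "k \<in> W"
  interpret Q: comm_group "Ab W" by (rule comm_Ab[OF W])
  have ik: "iv k \<in> W" using subgroup.m_inv_closed[OF W ak(2)] .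
  have ka: "k ** a \<in> W" using subgroup.m_closed[OF W ak(2,1)] .
  have "ab_class W (k ** a ** iv k) = ab_class W k \<otimes>\<^bsub>Ab W\<^esub> ab_class W a \<otimes>\<^bsub>Ab W\<^esub> inv\<^bsub>Ab W\<^esub> ab_class W k"
    using cls_mult[OF W ka ik] cls_mult[OF W ak(2,1)] cls_inv[OF W ak(2)] by simp
  also have "\<dots> = ab_class W a"
  proof -
    have A: "ab_class W a \<in> carrier (Ab W)" "ab_class W k \<in> carrier (Ab W)"
      using cls_carrier[OF W ak(1)] cls_carrier[OF W ak(2)] by auto
    have "ab_class W k \<otimes>\<^bsub>Ab W\<^esub> ab_class W a = ab_class W a \<otimes>\<^bsub>Ab W\<^esub> ab_class W k"
      by (rule Q.m_comm[OF A(2,1)])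
    then show ?thesis using A by (simp only: Q.m_assoc Q.r_inv Q.inv_closed Q.r_one)
  qed
  finally show ?thesis .
qed

lemma derived_map: "subgroup W SL2Z \<Longrightarrow> subgroup Y SL2Z \<Longrightarrow> f \<in> hom (Grp W) SL2Z \<Longrightarrow>
   f ` W \<subseteq> Y \<Longrightarrow> d \<in> DD W \<Longrightarrow> f d \<in> DD Y"
proof -
  assume W: "subgroup W SL2Z" and Y: "subgroup Y SL2Z" and f: "f \<in> hom (Grp W) SL2Z"
    and fXY: "f ` W \<subseteq> Y" and d: "d \<in> DD W"
  interpret gh: group_hom "Grp W" SL2Z f
    by (simp add: group_hom_def group_hom_axioms_def f group_Grp[OF W] S.is_group)
  have "derived SL2Z (f ` W) = f ` derived (Grp W) W"
    using gh.derived_img[of W] by simp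
  moreover have "derived SL2Z (f ` W) \<subseteq> DD Y" by (rule S.mono_derived[OF fXY])
  ultimately show ?thesis using d W by auto
qed

declare SL2Z_simps(1)[simp del] SL2Z_simps(3)[simp del]

lemma S_c1: "x \<in> carrier SL2Z \<Longrightarrow> y \<in> carrier SL2Z \<Longrightarrow> iv x ** (x ** y) = y"
  by (simp add: S.m_assoc[symmetric])
lemma S_c2: "x \<in> carrier SL2Z \<Longrightarrow> y \<in> carrier SL2Z \<Longrightarrow> x ** (iv x ** y) = y"
  by (simp add: S.m_assoc[symmetric])

lemmas Ssimps = S.m_assoc S.inv_mult_group S.inv_inv S_c1 S_c2 S.m_closed S.inv_closed

locale idx2 =
  fixes G H :: "m2 set" and u0 :: m2
  assumes subG: "subgroup G SL2Z" and subH: "subgroup H SL2Z" and HG: "H \<subseteq> G"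
    and par: "\<And>x y. x \<in> G \<Longrightarrow> y \<in> G \<Longrightarrow> (x ** y \<in> H \<longleftrightarrow> (x \<in> H \<longleftrightarrow> y \<in> H))"
    and u0G: "u0 \<in> G" and u0H: "u0 \<notin> H"
begin

lemma Gc: "x \<in> G \<Longrightarrow> x \<in> carrier SL2Z"
  using subgroup.subset[OF subG] by blast
lemma Hc: "x \<in> H \<Longrightarrow> x \<in> carrier SL2Z"
  using subgroup.subset[OF subH] by blast
lemma HG': "x \<in> H \<Longrightarrow> x \<in> G" using HG by blast
lemma mG: "x \<in> G \<Longrightarrow> y \<in> G \<Longrightarrow> x ** y \<in> G" by (rule subgroup.m_closed[OF subG])
lemma iG: "x \<in> G \<Longrightarrow> iv x \<in> G" by (rule subgroup.m_inv_closed[OF subG])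
lemma mH: "x \<in> H \<Longrightarrow> y \<in> H \<Longrightarrow> x ** y \<in> H" by (rule subgroup.m_closed[OF subH])
lemma iH: "x \<in> H \<Longrightarrow> iv x \<in> H" by (rule subgroup.m_inv_closed[OF subH])

lemma par_inv: "x \<in> G \<Longrightarrow> iv x \<in> H \<longleftrightarrow> x \<in> H"
proof
  assume "x \<in> G" "iv x \<in> H"
  then have "iv (iv x) \<in> H" by (rule_tac iH)
  then show "x \<in> H" using Gc[OF \<open>x \<in> G\<close>] by simp
qed (rule iH)

lemma conjH: "w \<in> G \<Longrightarrow> h \<in> H \<Longrightarrow> w ** h ** iv w \<in> H"
  using par[of "w ** h" "iv w"] par[of w h] par_inv[of w] mG iG HG' by blast

lemma diffH: "x \<in> G \<Longrightarrow> y \<in> G \<Longrightarrow> x \<notin> H \<Longrightarrow> y \<notin> H \<Longrightarrow> x ** iv y \<in> H"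
  using par[of x "iv y"] par_inv[of y] iG by blast

lemma sqH: "x \<in> G \<Longrightarrow> x ** x \<in> H"
  using par[of x x] by blast

lemma conj_indep: "w \<in> G \<Longrightarrow> w' \<in> G \<Longrightarrow> w ** iv w' \<in> H \<Longrightarrow> h \<in> H \<Longrightarrow>
  ab_class H (w ** h ** iv w) = ab_class H (w' ** h ** iv w')"
proof -
  assume w: "w \<in> G" "w' \<in> G" and k: "w ** iv w' \<in> H" and h: "h \<in> H"
  have c: "w \<in> carrier SL2Z" "w' \<in> carrier SL2Z" "h \<in> carrier SL2Z" using w h Gc Hc by auto
  have e: "w ** iv w' ** (w' ** h ** iv w') ** iv (w ** iv w') = w ** h ** iv w"
    using c by (simp add: Ssimps)
  have "ab_class H (w ** iv w' ** (w' ** h ** iv w') ** iv (w ** iv w')) = ab_class H (w' ** h ** iv w')"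
    by (rule cls_conj[OF subH conjH[OF w(2) h] k])
  then show ?thesis using e by simp
qed

lemma conj_u0: "w \<in> G \<Longrightarrow> w \<notin> H \<Longrightarrow> h \<in> H \<Longrightarrow>
  ab_class H (w ** h ** iv w) = ab_class H (u0 ** h ** iv u0)"
  by (rule conj_indep[OF _ u0G diffH[OF _ u0G _ u0H]])

definition Vr :: "m2 \<Rightarrow> m2" where
  "Vr g = (if g \<in> H then g ** (u0 ** g ** iv u0) else g ** g)"

definition V :: "m2 \<Rightarrow> m2 set" where "V g = ab_class H (Vr g)"

lemma Vr_H: "g \<in> G \<Longrightarrow> Vr g \<in> H"
  unfolding Vr_def using mH conjH[OF u0G] sqH by auto

abbreviation qm (infixl "\<odot>" 70) where "x \<odot> y \<equiv> x \<otimes>\<^bsub>Ab H\<^esub> y"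
abbreviation cl where "cl x \<equiv> ab_class H x"

lemma clm: "x \<in> H \<Longrightarrow> y \<in> H \<Longrightarrow> cl (x ** y) = cl x \<odot> cl y"
  by (rule cls_mult[OF subH])

lemma clc: "x \<in> H \<Longrightarrow> cl x \<in> carrier (Ab H)"
  by (rule cls_carrier[OF subH])

lemma V_in: "g \<in> H \<Longrightarrow> V g = cl g \<odot> cl (u0 ** g ** iv u0)"
  unfolding V_def Vr_def using clm conjH[OF u0G] by simp

lemma V_out: "g \<in> G \<Longrightarrow> g \<notin> H \<Longrightarrow> V g = cl (g ** g)"
  unfolding V_def Vr_def by simp

lemma V_carrier: "g \<in> G \<Longrightarrow> V g \<in> carrier (Ab H)"
  unfolding V_def using Vr_H clc by blast

end

context idx2 begin

lemma V_mult: "g \<in> G \<Longrightarrow> g' \<in> G \<Longrightarrow> V (g ** g') = V g \<odot> V g'"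
proof -
  assume g: "g \<in> G" "g' \<in> G"
  interpret Q: comm_group "Ab H" by (rule comm_Ab[OF subH])
  have c: "g \<in> carrier SL2Z" "g' \<in> carrier SL2Z" "u0 \<in> carrier SL2Z" using g u0G Gc by auto
  show ?thesis
  proof (cases "g \<in> H"; cases "g' \<in> H")
    assume h: "g \<in> H" "g' \<in> H"
    have gg: "g ** g' \<in> H" using h mH by blast
    have e: "u0 ** (g ** g') ** iv u0 = (u0 ** g ** iv u0) ** (u0 ** g' ** iv u0)"
      using c by (simp add: Ssimps)
    have ch: "u0 ** g ** iv u0 \<in> H" "u0 ** g' ** iv u0 \<in> H" using conjH[OF u0G] h by auto
    have "V (g ** g') = (cl g \<odot> cl g') \<odot> (cl (u0 ** g ** iv u0) \<odot> cl (u0 ** g' ** iv u0))"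
      using V_in[OF gg] e clm h ch by simp
    also have "\<dots> = (cl g \<odot> cl (u0 ** g ** iv u0)) \<odot> (cl g' \<odot> cl (u0 ** g' ** iv u0))"
      using clc h ch by (simp add: Q.m_ac)
    finally show ?thesis using V_in h by simp
  next
    assume h: "g \<in> H" "g' \<notin> H"
    have gg: "g ** g' \<notin> H" using h par g by blast
    have e: "g ** g' ** (g ** g') = g ** (g' ** g ** iv g') ** (g' ** g')"
      using c by (simp add: Ssimps)
    have ch: "g' ** g ** iv g' \<in> H" "g' ** g' \<in> H" using conjH g h sqH by auto
    have "V (g ** g') = cl g \<odot> cl (g' ** g ** iv g') \<odot> cl (g' ** g')"
      using V_out[OF mG[OF g] gg] e clm h ch mH by simp
    also have "\<dots> = cl g \<odot> cl (u0 ** g ** iv u0) \<odot> cl (g' ** g')"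
      using conj_u0[OF g(2) h(2) h(1)] by simp
    finally show ?thesis using V_in V_out g h by simp
  next
    assume h: "g \<notin> H" "g' \<in> H"
    have gg: "g ** g' \<notin> H" using h par g by blast
    have e: "g ** g' ** (g ** g') = (g ** g' ** iv g) ** (g ** g) ** g'"
      using c by (simp add: Ssimps)
    have ch: "g ** g' ** iv g \<in> H" "g ** g \<in> H" using conjH g h sqH by auto
    have "V (g ** g') = cl (g ** g' ** iv g) \<odot> cl (g ** g) \<odot> cl g'"
      using V_out[OF mG[OF g] gg] e clm h ch mH by simp
    also have "\<dots> = cl (u0 ** g' ** iv u0) \<odot> cl (g ** g) \<odot> cl g'"
      using conj_u0[OF g(1) h(1) h(2)] by simp
    also have "\<dots> = cl (g ** g) \<odot> (cl g' \<odot> cl (u0 ** g' ** iv u0))"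
      using clc h ch conjH[OF u0G h(2)] by (simp add: Q.m_ac)
    finally show ?thesis using V_in V_out g h by simp
  next
    assume h: "g \<notin> H" "g' \<notin> H"
    have gg: "g ** g' \<in> H" using h par g by blast
    have gH: "g' ** g \<in> H" using h par g by blast
    have ch: "g ** g \<in> H" "g' ** g' \<in> H" using g sqH by auto
    have "cl (u0 ** (g ** g') ** iv u0) = cl (g' ** (g ** g') ** iv g')"
      using conj_u0[OF g(2) h(2) gg] by simp
    also have "g' ** (g ** g') ** iv g' = g' ** g" using c by (simp add: Ssimps)
    finally have 1: "V (g ** g') = cl (g ** g') \<odot> cl (g' ** g)" using V_in[OF gg] by simp
    have e: "g ** g' ** (g' ** g) = (g ** (g' ** g') ** iv g) ** (g ** g)"
      using c by (simp add: Ssimps)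
    have "cl (g ** (g' ** g') ** iv g) = cl (g' ** (g' ** g') ** iv g')"
      using conj_indep[OF g diffH[OF g h] ch(2)] .
    also have "g' ** (g' ** g') ** iv g' = g' ** g'" using c by (simp add: Ssimps)
    finally have 2: "cl (g ** (g' ** g') ** iv g) = cl (g' ** g')" .
    have "V (g ** g') = cl (g ** (g' ** g') ** iv g) \<odot> cl (g ** g)"
      unfolding 1 clm[OF gg gH, symmetric] e using clm conjH g ch by simp
    also have "\<dots> = cl (g ** g) \<odot> cl (g' ** g')" using 2 clc ch by (simp add: Q.m_comm)
    finally show ?thesis using V_out g h by simp
  qed
qed

lemma V_hom: "V \<in> hom (Grp G) (Ab H)"
  by (rule homI) (simp_all add: V_carrier V_mult)

lemma V_D: "d \<in> DD G \<Longrightarrow> V d = \<one>\<^bsub>Ab H\<^esub>"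
proof -
  assume d: "d \<in> DD G"
  interpret Q: comm_group "Ab H" by (rule comm_Ab[OF subH])
  interpret gh: group_hom "Grp G" "Ab H" V
    by (simp add: group_hom_def group_hom_axioms_def V_hom group_Grp[OF subG] Q.is_group)
  have "derived (Ab H) (V ` G) = V ` derived (Grp G) G"
    using gh.derived_img[of G] by simp
  moreover have "derived (Ab H) (V ` G) = {\<one>\<^bsub>Ab H\<^esub>}"
    by (rule Q.derived_eq_singleton) (auto simp: V_carrier)
  ultimately show ?thesis using d subG by auto
qed

lemma V_cls: "x \<in> G \<Longrightarrow> y \<in> G \<Longrightarrow> ab_class G x = ab_class G y \<Longrightarrow> V x = V y"
proof -
  assume xy: "x \<in> G" "y \<in> G" "ab_class G x = ab_class G y"
  interpret Q: comm_group "Ab H" by (rule comm_Ab[OF subH])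
  have d: "x ** iv y \<in> DD G" using cls_eq_iff[OF subG xy(1,2)] xy(3) by simp
  have "x = x ** iv y ** y" using Gc xy by (simp add: Ssimps)
  then have "V x = V (x ** iv y) \<odot> V y" using V_mult[OF mG[OF xy(1) iG[OF xy(2)]] xy(2)] by simp
  then show ?thesis using V_D[OF d] V_carrier[OF xy(2)] by simp
qed

end

lemma distinct2: "distinct xs \<Longrightarrow> set xs = {p, q} \<Longrightarrow> p \<noteq> q \<Longrightarrow> xs = [p, q] \<or> xs = [q, p]"
proof -
  assume a: "distinct xs" "set xs = {p, q}" "p \<noteq> q"
  then have "length xs = 2" using distinct_card[OF a(1)] by simp
  then obtain x y where xs: "xs = [x, y]"
    by (cases xs; cases "tl xs") auto
  then show ?thesis using a by auto
qed

context idx2 begin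

lemma in_coset: "x \<in> G \<Longrightarrow> t \<in> G \<Longrightarrow> x \<in> H #>\<^bsub>Grp G\<^esub> t \<longleftrightarrow> (x \<in> H \<longleftrightarrow> t \<in> H)"
proof -
  assume xt: "x \<in> G" "t \<in> G"
  have "x \<in> H #>\<^bsub>Grp G\<^esub> t \<longleftrightarrow> x ** iv t \<in> H"
    using subgroup.rcos_module[OF subH S.is_group Gc[OF xt(2)] Gc[OF xt(1)]] by simp
  also have "\<dots> \<longleftrightarrow> (x \<in> H \<longleftrightarrow> t \<in> H)"
    using par[OF xt(1) iG[OF xt(2)]] par_inv[OF xt(2)] by simp
  finally show ?thesis .
qed

lemma transversal_shape:
  assumes "right_transversal (Grp G) H ts"
  shows "\<exists>p q. p \<in> H \<and> q \<in> G \<and> q \<notin> H \<and> (ts = [p, q] \<or> ts = [q, p])"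
proof -
  have d: "distinct ts" and sub: "set ts \<subseteq> G"
    and u': "\<forall>g\<in>G. \<exists>!t. t \<in> set ts \<and> g \<in> H #>\<^bsub>Grp G\<^esub> t"
    using assms unfolding right_transversal_def by simp_all
  have u: "\<exists>!t. t \<in> set ts \<and> (g \<in> H \<longleftrightarrow> t \<in> H)" if g: "g \<in> G" for g
  proof -
    have eq: "(t \<in> set ts \<and> g \<in> H #>\<^bsub>Grp G\<^esub> t) \<longleftrightarrow> (t \<in> set ts \<and> (g \<in> H \<longleftrightarrow> t \<in> H))" for t
      using in_coset[OF g, of t] sub by blast
    have "\<exists>!t. t \<in> set ts \<and> g \<in> H #>\<^bsub>Grp G\<^esub> t" using u' g by blast
    then show ?thesis by (simp only: eq)
  qed
  have oneG: "\<one>\<^bsub>SL2Z\<^esub> \<in> G" "\<one>\<^bsub>SL2Z\<^esub> \<in> H"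
    using subgroup.one_closed[OF subG] subgroup.one_closed[OF subH] by auto
  obtain p where p: "p \<in> set ts" "p \<in> H" and pu: "\<And>t. t \<in> set ts \<Longrightarrow> t \<in> H \<Longrightarrow> t = p"
    using u[OF oneG(1)] oneG(2) by blast
  obtain q where q: "q \<in> set ts" "q \<notin> H" and qu: "\<And>t. t \<in> set ts \<Longrightarrow> t \<notin> H \<Longrightarrow> t = q"
    using u[OF u0G] u0H by blast
  have "set ts = {p, q}" using p q pu qu by blast
  moreover have "p \<noteq> q" using p q by blast
  ultimately show ?thesis using distinct2[OF d] p q sub by blast
qed

lemma transfer_rep_two:
  assumes t: "set ts = {p, q}" "ts = [t1, t2]" and pq: "p \<in> G" "p \<in> H" "q \<in> G" "q \<notin> H"
    and g: "g \<in> G"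
  shows "transfer_rep (Grp G) H ts g =
    (t1 ** g ** iv (if t1 ** g \<in> H then p else q)) ** (t2 ** g ** iv (if t2 ** g \<in> H then p else q))"
proof -
  have sel: "(THE t'. t' \<in> set ts \<and> t ** g \<in> H #>\<^bsub>Grp G\<^esub> t') = (if t ** g \<in> H then p else q)"
    if tG: "t \<in> G" for t
  proof -
    have tg: "t ** g \<in> G" using mG[OF tG g] .
    have cp: "t ** g \<in> H #>\<^bsub>Grp G\<^esub> p \<longleftrightarrow> t ** g \<in> H" using in_coset[OF tg pq(1)] pq by simp
    have cq: "t ** g \<in> H #>\<^bsub>Grp G\<^esub> q \<longleftrightarrow> t ** g \<notin> H" using in_coset[OF tg pq(3)] pq by simp
    show ?thesis
    proof (rule the_equality)
      show "(if t ** g \<in> H then p else q) \<in> set ts \<and> t ** g \<in> H #>\<^bsub>Grp G\<^esub> (if t ** g \<in> H then p else q)"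
        using t(1) cp cq by simp
    next
      fix t' assume a: "t' \<in> set ts \<and> t ** g \<in> H #>\<^bsub>Grp G\<^esub> t'"
      then have "t' = p \<or> t' = q" using t(1) by blast
      then show "t' = (if t ** g \<in> H then p else q)"
      proof
        assume "t' = p" then show ?thesis using a cp by simp
      next
        assume "t' = q" then show ?thesis using a cq by simp
      qed
    qed
  qed
  have s12: "{t1, t2} = {p, q}" using t by simp
  then have "t1 \<in> {p, q}" "t2 \<in> {p, q}" by blast+
  then have t12: "t1 \<in> G" "t2 \<in> G" using pq by blast+
  have c: "t1 ** g ** iv (if t1 ** g \<in> H then p else q) \<in> G"
          "t2 ** g ** iv (if t2 ** g \<in> H then p else q) \<in> G"
    using t12 g pq by (simp_all add: mG iG)
  have "transfer_rep (Grp G) H ts g = (t1 ** g ** inv\<^bsub>Grp G\<^esub> (if t1 ** g \<in> H then p else q)) **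
      ((t2 ** g ** inv\<^bsub>Grp G\<^esub> (if t2 ** g \<in> H then p else q)) ** \<one>\<^bsub>SL2Z\<^esub>)"
    using t(2) sel[OF t12(1)] sel[OF t12(2)] by (simp add: transfer_rep_def)
  also have "\<dots> = (t1 ** g ** iv (if t1 ** g \<in> H then p else q)) ** (t2 ** g ** iv (if t2 ** g \<in> H then p else q))" using pq c Gc by (simp add: inv_Grp[OF subG])
  finally show ?thesis .
qed

end

context idx2 begin

lemma TR: assumes ts: "right_transversal (Grp G) H ts" and g: "g \<in> G"
  shows "cl (transfer_rep (Grp G) H ts g) = V g"
proof -
  interpret Q: comm_group "Ab H" by (rule comm_Ab[OF subH])
  obtain p q where pq: "p \<in> H" "q \<in> G" "q \<notin> H" and ts2: "ts = [p, q] \<or> ts = [q, p]"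
    using transversal_shape[OF ts] by blast
  have pG: "p \<in> G" using pq HG' by blast
  have st: "set ts = {p, q}" using ts2 by auto
  have c: "p \<in> carrier SL2Z" "q \<in> carrier SL2Z" "g \<in> carrier SL2Z" using pG pq g Gc by auto
  show ?thesis
  proof (cases "g \<in> H")
    case True
    have s1: "p ** g \<in> H" using mH pq True by blast
    have s2: "q ** g \<notin> H" using par[OF pq(2) g] pq True by blast
    have h1: "p ** g ** iv p \<in> H" "q ** g ** iv q \<in> H" using conjH pG pq True by auto
    have e1: "cl (p ** g ** iv p) = cl g" using cls_conj[OF subH True pq(1)] .
    have e2: "cl (q ** g ** iv q) = cl (u0 ** g ** iv u0)" using conj_u0[OF pq(2,3) True] .
    have cc: "cl g \<in> carrier (Ab H)" "cl (u0 ** g ** iv u0) \<in> carrier (Ab H)"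
      using clc True conjH[OF u0G True] by auto
    from ts2 show ?thesis
    proof
      assume t: "ts = [p, q]"
      show ?thesis using transfer_rep_two[OF st t pG pq(1) pq(2,3) g] s1 s2 clm[OF h1] e1 e2 V_in[OF True]
        by simp
    next
      assume t: "ts = [q, p]"
      show ?thesis using transfer_rep_two[OF st t pG pq(1) pq(2,3) g] s1 s2 clm[OF h1(2,1)] e1 e2 V_in[OF True]
        Q.m_comm[OF cc] by simp
    qed
  next
    case False
    have s1: "p ** g \<notin> H" using par[OF pG g] pq False by blast
    have s2: "q ** g \<in> H" using par[OF pq(2) g] pq False by blast
    have gg: "g ** g \<in> H" using sqH[OF g] .
    from ts2 show ?thesis
    proof
      assume t: "ts = [p, q]"
      have e: "(p ** g ** iv q) ** (q ** g ** iv p) = p ** (g ** g) ** iv p" using c by (simp add: Ssimps)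
      show ?thesis using transfer_rep_two[OF st t pG pq(1) pq(2,3) g] s1 s2 e
          cls_conj[OF subH gg pq(1)] V_out[OF g False] by simp
    next
      assume t: "ts = [q, p]"
      have e: "(q ** g ** iv p) ** (p ** g ** iv q) = q ** (g ** g) ** iv q" using c by (simp add: Ssimps)
      have e2: "g ** (g ** g) ** iv g = g ** g" using c by (simp add: Ssimps)
      show ?thesis using transfer_rep_two[OF st t pG pq(1) pq(2,3) g] s1 s2 e
          conj_indep[OF pq(2) g diffH[OF pq(2) g pq(3) False] gg] e2 V_out[OF g False] by simp
    qed
  qed
qed

lemma transversal_ex: "right_transversal (Grp G) H [\<one>\<^bsub>SL2Z\<^esub>, u0]"
proof -
  have o: "\<one>\<^bsub>SL2Z\<^esub> \<in> G" "\<one>\<^bsub>SL2Z\<^esub> \<in> H"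
    using subgroup.one_closed[OF subG] subgroup.one_closed[OF subH] by auto
  have ne: "\<one>\<^bsub>SL2Z\<^esub> \<noteq> u0" using o u0H by blast
  have "\<exists>!t. t \<in> set [\<one>\<^bsub>SL2Z\<^esub>, u0] \<and> g \<in> H #>\<^bsub>Grp G\<^esub> t" if g: "g \<in> G" for g
  proof (cases "g \<in> H")
    case True
    show ?thesis
    proof (rule ex1I[of _ "\<one>\<^bsub>SL2Z\<^esub>"])
      show "\<one>\<^bsub>SL2Z\<^esub> \<in> set [\<one>\<^bsub>SL2Z\<^esub>, u0] \<and> g \<in> H #>\<^bsub>Grp G\<^esub> \<one>\<^bsub>SL2Z\<^esub>"
        using in_coset[OF g o(1)] o True by simp
      fix t assume "t \<in> set [\<one>\<^bsub>SL2Z\<^esub>, u0] \<and> g \<in> H #>\<^bsub>Grp G\<^esub> t"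
      then show "t = \<one>\<^bsub>SL2Z\<^esub>" using in_coset[OF g u0G] u0H True by auto
    qed
  next
    case False
    show ?thesis
    proof (rule ex1I[of _ u0])
      show "u0 \<in> set [\<one>\<^bsub>SL2Z\<^esub>, u0] \<and> g \<in> H #>\<^bsub>Grp G\<^esub> u0"
        using in_coset[OF g u0G] u0H False by simp
      fix t assume "t \<in> set [\<one>\<^bsub>SL2Z\<^esub>, u0] \<and> g \<in> H #>\<^bsub>Grp G\<^esub> t"
      then show "t = u0" using in_coset[OF g o(1)] o False by auto
    qed
  qed
  then show ?thesis unfolding right_transversal_def using ne o u0G by simp
qed

lemma transfer_cls: "x \<in> G \<Longrightarrow> transfer G H (ab_class G x) = V x"
proof -
  assume x: "x \<in> G"
  define ts where "ts = (SOME ts. right_transversal (Grp G) H ts)"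
  have ts: "right_transversal (Grp G) H ts" unfolding ts_def using transversal_ex by (rule someI)
  have r: "rep (ab_class G x) \<in> G" "ab_class G (rep (ab_class G x)) = ab_class G x"
    using rep_cls[OF subG x] by auto
  have "transfer G H (ab_class G x) = cl (transfer_rep (Grp G) H ts (rep (ab_class G x)))"
    unfolding transfer_def ab_map_def ts_def ..
  also have "\<dots> = V (rep (ab_class G x))" using TR[OF ts r(1)] .
  also have "\<dots> = V x" using V_cls[OF r(1) x r(2)] .
  finally show ?thesis .
qed

end

lemma up2_iff2: "v \<in> Gamma0_up2 \<longleftrightarrow> v \<in> carrier SL2Z \<and> even (fst (snd v))"
  by (cases v) (auto simp: up2_iff SL2Z_simps(1))

lemma PP_c: "x \<in> PP M R \<Longrightarrow> x \<in> carrier SL2Z"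
  using subgroup.subset[OF subgroup_PP] by blast

lemma PP_odd: "2 dvd M \<Longrightarrow> (a,b,c,d) \<in> PP M R \<Longrightarrow> odd a \<and> odd d"
proof -
  assume "2 dvd M" "(a,b,c,d) \<in> PP M R"
  then have "2 dvd M" "M dvd a - 1" "M dvd d - 1" unfolding PP_def by auto
  then have "2 dvd a - 1" "2 dvd d - 1" using dvd_trans by blast+
  then show ?thesis by presburger
qed

lemma par_PP: assumes M: "2 dvd M" and x: "x \<in> PP M R" and y: "y \<in> PP M R"
  shows "x ** y \<in> Gamma0_up2 \<longleftrightarrow> (x \<in> Gamma0_up2 \<longleftrightarrow> y \<in> Gamma0_up2)"
proof -
  obtain a b c d e f g h where xy: "x = (a,b,c,d)" "y = (e,f,g,h)" by (cases x; cases y) auto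
  have o: "odd a" "odd h" using PP_odd[OF M] x y xy by blast+
  have c: "x ** y \<in> carrier SL2Z" using x y PP_c S.m_closed by blast
  have "even (a * f + b * h) \<longleftrightarrow> (even b \<longleftrightarrow> even f)" using o by auto
  then show ?thesis using c PP_c[OF x] PP_c[OF y] xy by (simp add: up2_iff2 SL2Z_mult)
qed

lemma u0_PP: "(1,1,0,1) \<in> PP M R" "(1,1,0,1) \<notin> Gamma0_up2"
  by (auto simp: PP_def up2_iff)

lemma conj_t_PP: "x \<in> PP M R \<Longrightarrow> x \<in> Gamma0_up2 \<Longrightarrow> conj_t x \<in> PP M (2 * R)"
proof -
  assume x: "x \<in> PP M R" "x \<in> Gamma0_up2"
  obtain p q u t where xe: "x = (p,q,u,t)" by (cases x) auto
  obtain k where k: "q = 2 * k" using x xe by (auto simp: up2_iff)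
  show ?thesis using x xe k by (auto simp: PP_def)
qed

lemma conj_t_mult: "x \<in> Gamma0_up2 \<Longrightarrow> y \<in> Gamma0_up2 \<Longrightarrow> conj_t (x ** y) = conj_t x ** conj_t y"
proof -
  assume x: "x \<in> Gamma0_up2" and y: "y \<in> Gamma0_up2"
  obtain p q u t where xe: "x = (p,q,u,t)" by (cases x) auto
  obtain p' q' u' t' where ye: "y = (p',q',u',t')" by (cases y) auto
  obtain k where k: "q = 2 * k" using x xe by (auto simp: up2_iff)
  obtain k' where k': "q' = 2 * k'" using y ye by (auto simp: up2_iff)
  have 1: "(p * (2 * k') + 2 * k * t') div 2 = p * k' + k * t'" by simp
  show ?thesis using xe ye k k' 1 by (simp add: SL2Z_mult algebra_simps)
qed

lemma conj_t_carrier: "x \<in> Gamma0_up2 \<Longrightarrow> conj_t x \<in> carrier SL2Z"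
proof -
  assume x: "x \<in> Gamma0_up2"
  obtain p q u t where xe: "x = (p,q,u,t)" by (cases x) auto
  obtain k where k: "q = 2 * k" using x xe by (auto simp: up2_iff)
  show ?thesis using x xe k by (auto simp: up2_iff SL2Z_simps(1))
qed

lemma ca_PP:
  assumes al: "a * d - b * c = 1" "even b" "odd a" "M dvd c" "R dvd c"
    and x: "x \<in> PP M R"
  shows "(a,b,c,d) ** x ** iv (a,b,c,d) \<in> PP M R \<and>
     ((a,b,c,d) ** x ** iv (a,b,c,d) \<in> Gamma0_up2 \<longleftrightarrow> x \<in> Gamma0_up2)"
proof -
  obtain p q u t where xe: "x = (p,q,u,t)" by (cases x) auto
  have h: "p * t - q * u = 1" "M dvd u" "M dvd p - 1" "M dvd t - 1" "R dvd u" using x xe by (auto simp: PP_def)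
  have ac: "(a,b,c,d) \<in> carrier SL2Z" using al by (simp add: SL2Z_simps(1))
  have iva: "iv (a,b,c,d) = (d,-b,-c,a)" using inv_SL2Z[OF ac] .
  define A where "A = (a * p + b * u) * d - (a * q + b * t) * c"
  define B where "B = -(a * p + b * u) * b + (a * q + b * t) * a"
  define C where "C = (c * p + d * u) * d - (c * q + d * t) * c"
  define D where "D = -(c * p + d * u) * b + (c * q + d * t) * a"
  have e: "(a,b,c,d) ** x ** iv (a,b,c,d) = (A,B,C,D)"
    unfolding iva xe A_def B_def C_def D_def by (simp add: SL2Z_mult algebra_simps)
  have cc: "(A,B,C,D) \<in> carrier SL2Z" using e ac PP_c[OF x] S.m_closed S.inv_closed by metis
  have ad: "a * d = 1 + b * c" using al by simp
  have A1: "A - 1 = a * d * (p - 1) + (a * d - b * c - 1) + c * (b - a * q - b * t) + u * (b * d)"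
    unfolding A_def by (simp add: algebra_simps)
  have D1: "D - 1 = a * d * (t - 1) + (a * d - b * c - 1) + c * (b - p * b + q * a) - u * (d * b)"
    unfolding D_def by (simp add: algebra_simps)
  have C1: "C = c * (p * d - q * c - d * t) + u * (d * d)" unfolding C_def by (simp add: algebra_simps)
  have "M dvd A - 1" unfolding A1 using al h by simp
  moreover have "M dvd D - 1" unfolding D1 using al h by simp
  moreover have "M dvd C" "R dvd C" unfolding C1 using al h by simp_all
  ultimately have inP: "(A,B,C,D) \<in> PP M R" using cc by (simp add: PP_def SL2Z_simps(1))
  obtain k where k: "b = 2 * k" using al by blast
  have B1: "B = 2 * (-(a * p + b * u) * k + a * t * k) + a * a * q" unfolding B_def k by (simp add: algebra_simps)
  have "even B \<longleftrightarrow> even q" unfolding B1 using al by simp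
  then show ?thesis using e inP cc PP_c[OF x] xe by (simp add: up2_iff2)
qed

lemma beta_facts:
  assumes al: "a * d - b * c = 1" "even b" "M dvd c" "R dvd c"
  shows "conj_t (a,b,c,d) \<in> carrier SL2Z"
    "conj_t (iv (a,b,c,d)) = iv (conj_t (a,b,c,d))"
    "conj_t (a,b,c,d) ** iv (a,b,c,d) \<in> PP M R"
proof -
  obtain k where k: "b = 2 * k" using al by blast
  have ac: "(a,b,c,d) \<in> carrier SL2Z" using al by (simp add: SL2Z_simps(1))
  have iva: "iv (a,b,c,d) = (d,-b,-c,a)" using inv_SL2Z[OF ac] .
  have bc: "(a, k, 2 * c, d) \<in> carrier SL2Z" using al k by (simp add: SL2Z_simps(1) algebra_simps)
  have ct: "conj_t (a,b,c,d) = (a, k, 2 * c, d)" using k by simp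
  show "conj_t (a,b,c,d) \<in> carrier SL2Z" using ct bc by simp
  show "conj_t (iv (a,b,c,d)) = iv (conj_t (a,b,c,d))" using ct inv_SL2Z[OF bc] iva k by simp
  have ad: "a * d = 1 + 2 * k * c" using al k by simp
  have "conj_t (a,b,c,d) ** iv (a,b,c,d) = (1 + k * c, -a * k, c * d, 1 - 2 * k * c)"
    using ct iva k ad by (simp add: SL2Z_mult algebra_simps)
  moreover have "(1 + k * c, -a * k, c * d, 1 - 2 * k * c) \<in> carrier SL2Z"
    using S.m_closed[OF bc S.inv_closed[OF ac]] ct iva k ad by (simp add: SL2Z_mult algebra_simps)
  ultimately show "conj_t (a,b,c,d) ** iv (a,b,c,d) \<in> PP M R"
    using al by (simp add: PP_def SL2Z_simps(1))
qed

context idx2 begin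

lemma Vr_nat:
  assumes f: "f \<in> hom (Grp G) SL2Z" and fG: "\<And>x. x \<in> G \<Longrightarrow> f x \<in> G"
    and fH: "\<And>x. x \<in> G \<Longrightarrow> f x \<in> H \<longleftrightarrow> x \<in> H" and x: "x \<in> G"
  shows "cl (Vr (f x)) = cl (f (Vr x))"
proof -
  interpret gh: group_hom "Grp G" SL2Z f
    by (simp add: group_hom_def group_hom_axioms_def f group_Grp[OF subG] S.is_group)
  have fm: "f (y ** z) = f y ** f z" if "y \<in> G" "z \<in> G" for y z
    using gh.hom_mult[of y z] that by simp
  have fi: "f (iv y) = iv (f y)" if "y \<in> G" for y
    using gh.hom_inv[of y] that inv_Grp[OF subG that] by simp
  show ?thesis
  proof (cases "x \<in> H")
    case False
    then show ?thesis using fH[OF x] fm[OF x x] by (simp add: Vr_def)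
  next
    case True
    have xh: "f x \<in> H" using fH[OF x] True by simp
    have fu: "f u0 \<in> G" "f u0 \<notin> H" using fG[OF u0G] fH[OF u0G] u0H by auto
    have e: "f (Vr x) = f x ** (f u0 ** f x ** iv (f u0))"
      using True x u0G by (simp add: Vr_def fm fi mG iG HG')
    have "cl (Vr (f x)) = cl (f x) \<odot> cl (u0 ** f x ** iv u0)"
      using xh clm conjH[OF u0G xh] by (simp add: Vr_def)
    also have "\<dots> = cl (f x) \<odot> cl (f u0 ** f x ** iv (f u0))"
      using conj_indep[OF fu(1) u0G diffH[OF fu(1) u0G fu(2) u0H] xh] by simp
    also have "\<dots> = cl (f (Vr x))" using e clm xh conjH[OF fu(1) xh] by simp
    finally show ?thesis .
  qed
qed

end

locale conc =
  fixes N r s :: nat and a b c d :: int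
  assumes s2: "2 \<le> s" "s \<le> r" and det: "a * d - b * c = 1" and be: "even b" and ao: "odd a"
    and Mc: "int N * 2^s dvd c" and rc: "2^r dvd c"
begin

abbreviation "M \<equiv> int N * 2^s"
abbreviation "GG \<equiv> Phi N r s"
abbreviation "HH \<equiv> Phi N r s \<inter> Gamma0_up2"
abbreviation "KK \<equiv> Phi N (r+1) s"
abbreviation "al \<equiv> (a,b,c,d)"
abbreviation "ca x \<equiv> al ** x ** iv al"

lemma GG_PP: "GG = PP M (2^r)" by (rule Phi_PP)
lemma KK_PP: "KK = PP M (2 * 2^r)" using Phi_PP[of N "r+1" s] by simp
lemma M2: "2 dvd M" using s2 by (simp add: dvd_mult_left[of 2 "2^s"] dvd_power[of s 2])

lemma subGG: "subgroup GG SL2Z" unfolding GG_PP by (rule subgroup_PP)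
lemma subHH: "subgroup HH SL2Z" by (rule S.subgroups_Inter_pair[OF subGG subgroup_up2])
lemma subKK: "subgroup KK SL2Z" unfolding KK_PP by (rule subgroup_PP)
lemma KG: "KK \<subseteq> GG" unfolding KK_PP GG_PP PP_def by (auto simp: dvd_mult_right)

lemma idx: "idx2 GG HH (1,1,0,1)"
proof -
  have u: "(1,1,0,1) \<in> GG" "(1,1,0,1) \<notin> HH" using u0_PP unfolding GG_PP by auto
  have p: "x ** y \<in> HH \<longleftrightarrow> (x \<in> HH \<longleftrightarrow> y \<in> HH)" if "x \<in> GG" "y \<in> GG" for x y
    using par_PP[OF M2, of x "2^r" y] subgroup.m_closed[OF subGG] that unfolding GG_PP by blast
  show ?thesis by (rule idx2.intro[OF subGG subHH _ p u]) blast+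
qed

end

sublocale conc \<subseteq> I: idx2 "Phi N r s" "Phi N r s \<inter> Gamma0_up2" "(1,1,0,1)" by (rule idx)

context conc begin

lemma alc: "al \<in> carrier SL2Z" using det by (simp add: SL2Z_simps(1))

lemma ca_G: "x \<in> GG \<Longrightarrow> ca x \<in> GG" and ca_H: "x \<in> GG \<Longrightarrow> ca x \<in> HH \<longleftrightarrow> x \<in> HH"
  using ca_PP[OF det be ao Mc rc, of x] unfolding GG_PP by auto

lemma ca_hom: "(\<lambda>x. ca x) \<in> hom (Grp GG) SL2Z"
proof (rule homI)
  fix x assume "x \<in> carrier (Grp GG)" then show "ca x \<in> carrier SL2Z"
    using ca_G I.Gc by simp
next
  fix x y assume "x \<in> carrier (Grp GG)" "y \<in> carrier (Grp GG)"
  then have c: "x \<in> carrier SL2Z" "y \<in> carrier SL2Z" using I.Gc by auto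
  show "ca (x \<otimes>\<^bsub>Grp GG\<^esub> y) = ca x \<otimes>\<^bsub>SL2Z\<^esub> ca y"
    using c alc by (simp add: Ssimps)
qed

lemma ct_hom: "conj_t \<in> hom (Grp HH) SL2Z"
proof (rule homI)
  fix x assume "x \<in> carrier (Grp HH)" then show "conj_t x \<in> carrier SL2Z"
    using conj_t_carrier by simp
next
  fix x y assume "x \<in> carrier (Grp HH)" "y \<in> carrier (Grp HH)"
  then show "conj_t (x \<otimes>\<^bsub>Grp HH\<^esub> y) = conj_t x \<otimes>\<^bsub>SL2Z\<^esub> conj_t y"
    using conj_t_mult by simp
qed

lemma ct_K: "x \<in> HH \<Longrightarrow> conj_t x \<in> KK"
  using conj_t_PP[of x M "2^r"] unfolding KK_PP GG_PP by blast

lemma ct_inv: "x \<in> HH \<Longrightarrow> conj_t (iv x) = iv (conj_t x)"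
proof -
  assume x: "x \<in> HH"
  interpret gh: group_hom "Grp HH" SL2Z conj_t
    by (simp add: group_hom_def group_hom_axioms_def ct_hom group_Grp[OF subHH] S.is_group)
  show ?thesis using gh.hom_inv[of x] x inv_Grp[OF subHH x] by simp
qed

lemma ct_transport: "v \<in> HH \<Longrightarrow> v' \<in> HH \<Longrightarrow> ab_class HH v = ab_class HH v' \<Longrightarrow>
   ab_class GG (conj_t v) = ab_class GG (conj_t v')"
proof -
  assume v: "v \<in> HH" "v' \<in> HH" "ab_class HH v = ab_class HH v'"
  have dv: "v ** iv v' \<in> DD HH" using cls_eq_iff[OF subHH v(1,2)] v(3) by simp
  have "conj_t (v ** iv v') \<in> DD KK"
    by (rule derived_map[OF subHH subKK ct_hom _ dv]) (use ct_K in blast)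
  moreover have "conj_t (v ** iv v') = conj_t v ** iv (conj_t v')"
    using conj_t_mult[of v "iv v'"] v I.iH ct_inv by simp
  ultimately have "conj_t v ** iv (conj_t v') \<in> DD GG" using S.mono_derived[OF KG] by auto
  moreover have "conj_t v \<in> GG" "conj_t v' \<in> GG" using ct_K[OF v(1)] ct_K[OF v(2)] KG by blast+
  ultimately show ?thesis using cls_eq_iff[OF subGG] by simp
qed

lemma atkin_cls: "x \<in> GG \<Longrightarrow> atkinU N r s (ab_class GG x) = ab_class GG (conj_t (I.Vr x))"
proof -
  assume x: "x \<in> GG"
  have V: "transfer GG HH (ab_class GG x) = ab_class HH (I.Vr x)"
    using I.transfer_cls[OF x] by (simp add: I.V_def)
  have vH: "I.Vr x \<in> HH" using I.Vr_H[OF x] .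
  define y where "y = rep (ab_class HH (I.Vr x))"
  have y: "y \<in> HH" "ab_class HH y = ab_class HH (I.Vr x)" using rep_cls[OF subHH vH] y_def by auto
  define z where "z = rep (ab_class KK (conj_t y))"
  have z: "z \<in> KK" "ab_class KK z = ab_class KK (conj_t y)" using rep_cls[OF subKK ct_K[OF y(1)]] z_def by auto
  have "z ** iv (conj_t y) \<in> DD KK" using cls_eq_iff[OF subKK z(1) ct_K[OF y(1)]] z(2) by simp
  then have "z ** iv (conj_t y) \<in> DD GG" using S.mono_derived[OF KG] by auto
  moreover have zg: "z \<in> GG" "conj_t y \<in> GG" using z(1) ct_K[OF y(1)] KG by auto
  ultimately have "ab_class GG z = ab_class GG (conj_t y)"
    using cls_eq_iff[OF subGG zg] by simp
  also have "\<dots> = ab_class GG (conj_t (I.Vr x))" using ct_transport[OF y(1) vH y(2)] .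
  finally have "ab_class GG z = ab_class GG (conj_t (I.Vr x))" .
  then show ?thesis unfolding atkinU_def V ab_map_def y_def[symmetric] z_def[symmetric] by simp
qed

end

context conc begin

lemma neben_cls: "x \<in> GG \<Longrightarrow> neben_act N r s al (ab_class GG x) = ab_class GG (ca (rep (ab_class GG x)))"
  by (simp add: neben_act_def ab_map_def)

lemma ca_cls: "w \<in> GG \<Longrightarrow> w0 \<in> GG \<Longrightarrow> ab_class GG w = ab_class GG w0 \<Longrightarrow> ab_class GG (ca w) = ab_class GG (ca w0)"
proof -
  assume w: "w \<in> GG" "w0 \<in> GG" "ab_class GG w = ab_class GG w0"
  have dv: "w ** iv w0 \<in> DD GG" using cls_eq_iff[OF subGG w(1,2)] w(3) by simp
  have "ca (w ** iv w0) \<in> DD GG"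
    by (rule derived_map[OF subGG subGG ca_hom _ dv]) (use ca_G in blast)
  moreover have "ca (w ** iv w0) = ca w ** iv (ca w0)"
    using I.Gc[OF w(1)] I.Gc[OF w(2)] alc by (simp add: Ssimps)
  ultimately show ?thesis using cls_eq_iff[OF subGG ca_G[OF w(1)] ca_G[OF w(2)]] by simp
qed

lemma main: "C \<in> carrier (Ab GG) \<Longrightarrow>
   atkinU N r s (neben_act N r s al C) = neben_act N r s al (atkinU N r s C)"
proof -
  assume "C \<in> carrier (Ab GG)"
  then obtain x0 where x0: "x0 \<in> GG" "C = ab_class GG x0" using carrier_Ab[OF subGG] by blast
  define x1 where "x1 = rep C"
  have x1: "x1 \<in> GG" "ab_class GG x1 = C" using rep_cls[OF subGG x0(1)] x0(2) x1_def by auto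
  have L0: "neben_act N r s al C = ab_class GG (ca x1)"
    using neben_cls[OF x0(1)] x0(2) x1_def by simp
  have L: "atkinU N r s (neben_act N r s al C) = ab_class GG (conj_t (I.Vr (ca x1)))"
    unfolding L0 by (rule atkin_cls[OF ca_G[OF x1(1)]])
  define v where "v = I.Vr x1"
  have v: "v \<in> HH" using I.Vr_H[OF x1(1)] v_def by simp
  have vG: "v \<in> GG" using v by blast
  define w0 where "w0 = conj_t v"
  have w0: "w0 \<in> GG" using ct_K[OF v] KG w0_def by blast
  have A: "atkinU N r s C = ab_class GG w0"
    using atkin_cls[OF x1(1)] x1(2) v_def w0_def by simp
  define w where "w = rep (ab_class GG w0)"
  have w: "w \<in> GG" "ab_class GG w = ab_class GG w0" using rep_cls[OF subGG w0] w_def by auto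
  have R: "neben_act N r s al (atkinU N r s C) = ab_class GG (ca w0)"
    unfolding A neben_cls[OF w0] w_def[symmetric] using ca_cls[OF w(1) w0 w(2)] .
  have caH: "ca v \<in> HH" using ca_H[OF vG] ca_G[OF vG] v by blast
  have "ab_class HH (I.Vr (ca x1)) = ab_class HH (ca v)"
    unfolding v_def by (rule I.Vr_nat[OF ca_hom ca_G ca_H x1(1)])
  then have a: "ab_class GG (conj_t (I.Vr (ca x1))) = ab_class GG (conj_t (ca v))"
    by (rule ct_transport[OF I.Vr_H[OF ca_G[OF x1(1)]] caH])
  have alu: "al \<in> Gamma0_up2" using det be by (simp add: up2_iff)
  have vu: "v \<in> Gamma0_up2" using v by blast
  have ialu: "iv al \<in> Gamma0_up2" using subgroup.m_inv_closed[OF subgroup_up2 alu] .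
  have avu: "al ** v \<in> Gamma0_up2" using subgroup.m_closed[OF subgroup_up2 alu vu] .
  have bf: "conj_t al \<in> carrier SL2Z" "conj_t (iv al) = iv (conj_t al)" "conj_t al ** iv al \<in> PP M (2^r)"
    using beta_facts[OF det be Mc rc] by auto
  have gam: "conj_t al ** iv al \<in> GG" using bf(3) GG_PP by simp
  have e1: "conj_t (ca v) = conj_t al ** w0 ** iv (conj_t al)"
    using conj_t_mult[OF avu ialu] conj_t_mult[OF alu vu] bf(2) w0_def by simp
  have e2: "conj_t al ** w0 ** iv (conj_t al) = (conj_t al ** iv al) ** ca w0 ** iv (conj_t al ** iv al)"
    using bf(1) alc I.Gc[OF w0] by (simp add: Ssimps)
  have b: "ab_class GG (conj_t (ca v)) = ab_class GG (ca w0)"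
    unfolding e1 e2 by (rule cls_conj[OF subGG ca_G[OF w0] gam])
  show ?thesis using L R a b by simp
qed

end

theorem lemma3p5:
  fixes N r s :: nat and \<delta> :: int and a b c d :: int
  assumes "odd N" and "N > 0" and "2 \<le> s" and "s \<le> r"
    and "[\<delta> = 1] (mod 4)"
    and "(a,b,c,d) \<in> Gamma1 (4 * int N) \<inter> Gamma0 (2^(r+1)) \<inter> Gamma0_up2"
    and "[d = \<delta>] (mod 2^r)"
  shows "\<forall>C \<in> carrier (Ab (Phi N r s)).
           atkinU N r s (neben_act N r s (a,b,c,d) C) = neben_act N r s (a,b,c,d) (atkinU N r s C)"
proof -
  have h: "a * d - b * c = 1" "4 * int N dvd c" "4 * int N dvd a - 1" "(2::int)^(r+1) dvd c" "even b"
    using assms(6) by (auto simp: Gamma1_def Gamma0_def Gamma0_up2_def cong_0_iff cong_iff_dvd_diff SL2Z_simps(1))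
  have "(2::int) dvd 4 * int N" by simp
  then have "2 dvd a - 1" using h(3) dvd_trans by blast
  then have ao: "odd a" by presburger
  have rc: "(2::int)^r dvd c" using h(4) dvd_trans[of "(2::int)^r" "2^(r+1)" c] by simp
  have Nc: "int N dvd c" using h(2) dvd_trans[of "int N" "4 * int N" c] by simp
  have sc: "(2::int)^s dvd c" using h(4) dvd_trans[of "(2::int)^s" "2^(r+1)" c] assms(4)
    by (simp add: le_imp_power_dvd)
  have cop: "coprime (int N) ((2::int)^s)" using assms(1) by simp
  have Mc: "int N * 2^s dvd c" by (rule divides_mult[OF Nc sc cop])
  interpret conc N r s a b c d
    by (unfold_locales) (use assms(3,4) h ao rc Mc in auto)
  show ?thesis using main by blast
qed


end
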